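(* Let $m,n\ge1$, $q=2^m$, and let $L(x)=ax^{2^k}+bx^{2^l}$ with $a,b\in\mathbb F_{q^n}$ and nonnegative integers $k,l$, such that $L$ is nonzero as a map on $\mathbb F_{q^n}$. Let $d=\gcd(l-k,mn)$, $e=\gcd(l-k,m)$ and $r=d/e$ (so $r$ divides $n$). If $a^{\frac{q^n-1}{2^d-1}}\ne b^{\frac{q^n-1}{2^d-1}}$, then $|\ker\mathrm{Tr}\cap\ker L^\prime|=1$. Assume now $a^{\frac{q^n-1}{2^d-1}}=b^{\frac{q^n-1}{2^d-1}}$. If $k\equiv l\pmod m$ and $a+b\in\mathbb F_q$, then \[|\ker\mathrm{Tr}\cap\ker L^\prime|=\begin{cases}2^d&\text{if }a+b\ne0\text{, or }a+b=0\text{ and }\mathrm{Tr}_r(a^{-1})=0,\\ q^{r-1}&\text{otherwise.}\end{cases}\] If $k\not\equiv l\pmod m$ and $a,b\in\mathbb F_q$, then \[|\ker\mathrm{Tr}\cap\ker L^\prime|=\begin{cases}2^d&\text{if }a^{\frac{q-1}{2^e-1}}\ne b^{\frac{q-1}{2^e-1}}\text{ or }\frac nr\text{ is even},\\ 2^{d-e}&\text{otherwise.}\end{cases}\]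
   Context: $\mathbb F_{q^n}$ is the finite field with $q^n$ elements. For $k'\mid n$, $\mathrm{Tr}_{k'}$ denotes the trace map of $\mathbb F_{q^n}$ over $\mathbb F_{q^{k'}}$, and $\mathrm{Tr}=\mathrm{Tr}_1$. Polynomials are regarded as maps on $\mathbb F_{q^n}$. For a $2$-linear polynomial $L(x)=\sum_j a_jx^{2^j}$ over $\mathbb F_{q^n}$, its adjoint is $L^\prime(x)=\sum_j(a_jx)^{2^{-j}}$, where $y\mapsto y^{2^{-j}}$ is the inverse of the automorphism $y\mapsto y^{2^j}$ of $\mathbb F_{q^n}$; here $L'(x)=(ax)^{2^{-k}}+(bx)^{2^{-l}}$. $\ker$ denotes the kernel of an additive map on $\mathbb F_{q^n}$. *)

theory Defs
  imports Main "HOL-Number_Theory.Cong"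
begin

definition subfield_q :: "nat \<Rightarrow> 'a::field set" where
  "subfield_q m = {x. x ^ (2 ^ m) = x}"

text \<open>Trace of F_{q^n} over F_{q^k'} for k' dividing n, where q = 2^m.\<close>
definition rel_trace :: "nat \<Rightarrow> nat \<Rightarrow> nat \<Rightarrow> 'a::field \<Rightarrow> 'a" where
  "rel_trace m n k' x = (\<Sum>i<n div k'. x ^ ((2 ^ m) ^ (k' * i)))"

definition abs_trace :: "nat \<Rightarrow> nat \<Rightarrow> 'a::field \<Rightarrow> 'a" where
  "abs_trace m n x = rel_trace m n 1 x"

definition frob_inv :: "nat \<Rightarrow> 'a::field \<Rightarrow> 'a" where
  "frob_inv j y = (THE z. z ^ (2 ^ j) = y)"

text \<open>Adjoint L'(x) = (a x)^(2^(-k)) + (b x)^(2^(-l)) of L(x) = a x^(2^k) + b x^(2^l).\<close>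
definition adjoint_L :: "'a::field \<Rightarrow> 'a \<Rightarrow> nat \<Rightarrow> nat \<Rightarrow> 'a \<Rightarrow> 'a" where
  "adjoint_L a b k l x = frob_inv k (a * x) + frob_inv l (b * x)"

end

theory Submission
  imports Defs "HOL-Number_Theory.Residues" "HOL-Computational_Algebra.Polynomial"
begin

definition Sf :: "nat \<Rightarrow> 'a::field set" where
  "Sf M = {x. x ^ (2 ^ M) = x}"

lemma mersenne_dvd: "(g::nat) dvd A \<Longrightarrow> (2 ^ g - 1) dvd (2 ^ A - (1::nat))"
proof -
  assume "g dvd A"
  then obtain c where A: "A = g * c" by blast
  have "[(2::nat) ^ g = 1] (mod 2 ^ g - 1)"
    by (subst cong_altdef_nat) auto
  hence "[((2::nat) ^ g) ^ c = 1 ^ c] (mod 2 ^ g - 1)" by (rule cong_pow)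
  hence "((2::nat) ^ g - 1) dvd ((2 ^ g) ^ c - 1)"
    by (subst (asm) cong_altdef_nat) auto
  thus ?thesis by (simp add: A power_mult)
qed

lemma card_fibers:
  assumes "finite A" "\<And>x. x \<in> A \<Longrightarrow> card {z\<in>A. f z = f x} = k"
  shows "card A = card (f ` A) * k"
proof -
  have "A = (\<Union>y\<in>f ` A. {z\<in>A. f z = y})" by blast
  moreover have "card (\<Union>y\<in>f ` A. {z\<in>A. f z = y}) = (\<Sum>y\<in>f ` A. card {z\<in>A. f z = y})"
    by (rule card_UN_disjoint) (use assms(1) in auto)
  ultimately have "card A = (\<Sum>y\<in>f ` A. card {z\<in>A. f z = y})" by simp
  also have "\<dots> = (\<Sum>y\<in>f ` A. k)"
    by (rule sum.cong) (auto simp: assms(2))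
  finally show ?thesis by simp
qed

lemma card_roots_pow:
  assumes "E \<ge> 1"
  shows "card {x::'a::idom. x ^ E = 1} \<le> E"
proof -
  let ?p = "monom (1::'a) E + [:-1:]"
  have dp: "degree ?p = E" using assms by (subst degree_add_eq_left) (auto simp: degree_monom_eq)
  hence "?p \<noteq> 0" using assms by auto
  hence "card {x. poly ?p x = 0} \<le> degree ?p" by (rule card_poly_roots_bound)
  moreover have "{x. poly ?p x = 0} = {x. x ^ E = 1}"
    by (auto simp: poly_monom)
  ultimately show ?thesis using dp by simp
qed

lemma cyc_shift:
  assumes "h r = h 0"
  shows "(\<Sum>i<r. h (Suc i)) = (\<Sum>i<r. (h i :: 'b::ab_group_add))"
proof -
  have "(\<Sum>i<Suc r. h i) = h 0 + (\<Sum>i<r. h (Suc i))" by (rule sum.lessThan_Suc_shift)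
  moreover have "(\<Sum>i<Suc r. h i) = (\<Sum>i<r. h i) + h r" by simp
  ultimately show ?thesis using assms by (simp add: add.commute)
qed

lemma degree_sum_monom:
  assumes "e \<ge> 1"
  shows "degree (\<Sum>i<Suc r'. monom (1::'b::comm_ring_1) (2 ^ (e * i))) = 2 ^ (e * r')"
proof (induction r')
  case 0 then show ?case by (simp add: degree_monom_eq)
next
  case (Suc r')
  have "(2::nat) ^ (e * r') < 2 ^ (e * Suc r')" using assms by (intro power_strict_increasing) auto
  hence "degree (\<Sum>i<Suc r'. monom (1::'b) (2 ^ (e * i))) < degree (monom (1::'b) (2 ^ (e * Suc r')))"
    using Suc by (simp add: degree_monom_eq)
  hence "degree ((\<Sum>i<Suc r'. monom (1::'b) (2 ^ (e * i))) + monom 1 (2 ^ (e * Suc r'))) = 2 ^ (e * Suc r')"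
    by (subst degree_add_eq_right) (auto simp: degree_monom_eq)
  thus ?case by (simp del: power_Suc)
qed

context
  fixes N :: nat
  assumes cardF: "card (UNIV :: 'a::{field,finite} set) = 2 ^ N"
begin

lemma char2: "(2::'a) = 0"
proof -
  have "CHAR('a) dvd 2 ^ N" using CHAR_dvd_CARD[where 'a='a] cardF by simp
  moreover have "prime CHAR('a)"
    by (rule prime_CHAR_semidom) (simp add: finite_imp_CHAR_pos)
  ultimately have "CHAR('a) dvd 2" using prime_dvd_power by blast
  hence "CHAR('a) = 2" using \<open>prime CHAR('a)\<close>
    using primes_dvd_imp_eq two_is_prime_nat by blast
  thus ?thesis using of_nat_CHAR[where 'a='a] by simp
qed

lemma add_self[simp]: "(x::'a) + x = 0"
  by (metis char2 mult_2 mult_zero_left)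

lemma uminus_self[simp]: "- (x::'a) = x"
  by (metis add_self add_eq_0_iff2)

lemma plus_eq0: "((x::'a) + y = 0) = (x = y)"
  by (metis add_eq_0_iff2 uminus_self)

lemma N_pos: "N \<ge> 1"
proof (rule ccontr)
  assume "\<not> N \<ge> 1" hence "N = 0" by simp
  hence "card (UNIV :: 'a set) = 1" using cardF by simp
  then obtain z where "(UNIV :: 'a set) = {z}" using card_1_singletonE by blast
  hence "(0::'a) = 1" by (metis UNIV_I singletonD)
  thus False by simp
qed

lemma pow_card: "(x::'a) ^ (2 ^ N) = x"
proof (cases "x = 0")
  case False
  have "x * (\<Prod>y\<in>UNIV-{0}. x * y) = x * x ^ (card (UNIV :: 'a set) - 1) * \<Prod>(UNIV-{0})"
    by (simp add: prod.distrib mult_ac)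
  also have "x * x ^ (card (UNIV :: 'a set) - 1) = x ^ Suc (card (UNIV :: 'a set) - 1)"
    by (subst power_Suc) auto
  also have "Suc (card (UNIV :: 'a set) - 1) = card (UNIV :: 'a set)"
    using finite_UNIV_card_ge_0[where ?'a = 'a] by simp
  also have "(\<Prod>y\<in>UNIV-{0}. x * y) = (\<Prod>y\<in>UNIV-{0}. y)"
    by (rule prod.reindex_bij_witness[of _ "\<lambda>y. y / x" "\<lambda>y. x * y"]) (use False in auto)
  finally show ?thesis
    by (simp add: cardF)
qed simp

lemma frob_add: "((x::'a) + y) ^ (2 ^ j) = x ^ (2 ^ j) + y ^ (2 ^ j)"
proof (induction j)
  case 0 then show ?case by simp
next
  case (Suc j)
  have "(x + y) ^ (2 ^ Suc j) = ((x + y) ^ (2 ^ j)) ^ 2"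
    by (simp add: power_mult[symmetric] mult.commute)
  also have "\<dots> = (x ^ (2 ^ j) + y ^ (2 ^ j)) ^ 2" using Suc by simp
  also have "\<dots> = (x ^ (2 ^ j))^2 + (y ^ (2 ^ j))^2"
    by (simp add: power2_sum mult_2[symmetric] del: add_self)
       (metis add_self mult.assoc mult_2 mult_zero_left add_0_right char2)
  also have "\<dots> = x ^ (2 ^ Suc j) + y ^ (2 ^ Suc j)"
    by (simp add: power_mult[symmetric] mult.commute)
  finally show ?case .
qed

lemma frob_sum: "(\<Sum>i\<in>A. (f i::'a)) ^ (2 ^ j) = (\<Sum>i\<in>A. (f i) ^ (2 ^ j))"
proof (cases "finite A")
  case True then show ?thesis
    by (induction A rule: finite_induct) (simp_all add: frob_add)
qed simp

lemma frob_inj: "(x::'a) ^ (2 ^ j) = y ^ (2 ^ j) \<Longrightarrow> x = y"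
proof -
  assume "x ^ (2 ^ j) = y ^ (2 ^ j)"
  hence "(x + y) ^ (2 ^ j) = 0" by (simp add: frob_add)
  hence "x + y = 0" by simp
  thus "x = y" by (simp add: plus_eq0)
qed

lemma frob_inj_iff: "((x::'a) ^ (2 ^ j) = y ^ (2 ^ j)) = (x = y)"
  using frob_inj by blast

lemma pow_iter: "(x::'a) ^ (2 ^ A) = x \<Longrightarrow> x ^ (2 ^ (A * u)) = x"
proof (induction u)
  case 0 then show ?case by simp
next
  case (Suc u)
  have "x ^ (2 ^ (A * Suc u)) = (x ^ (2 ^ (A * u))) ^ (2 ^ A)"
    by (simp add: power_add power_mult[symmetric] mult.commute)
  also have "\<dots> = x" using Suc by simp
  finally show ?case .
qed

lemma pow_shift: "(x::'a) ^ (2 ^ (A + B)) = (x ^ (2 ^ A)) ^ (2 ^ B)"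
  by (simp add: power_add power_mult)

lemma pow_mod: "(x::'a) ^ (2 ^ A) = x \<Longrightarrow> x ^ (2 ^ B) = x ^ (2 ^ (B mod A))"
proof -
  assume h: "x ^ (2 ^ A) = x"
  have "B = A * (B div A) + B mod A" by simp
  hence "x ^ (2 ^ B) = (x ^ (2 ^ (A * (B div A)))) ^ (2 ^ (B mod A))"
    by (metis pow_shift)
  thus ?thesis using pow_iter[OF h] by simp
qed

lemma pow_N_mult: "(x::'a) ^ (2 ^ (N * u)) = x"
  using pow_iter[OF pow_card] .

lemma frob_inv_eq: "frob_inv j (y::'a) = y ^ (2 ^ (N * j - j))"
  unfolding frob_inv_def
proof (rule the_equality)
  have "N * j \<ge> j" using N_pos by simp
  hence "(y ^ (2 ^ (N * j - j))) ^ (2 ^ j) = y ^ (2 ^ (N * j))"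
    by (metis pow_shift le_add_diff_inverse2)
  thus "(y ^ (2 ^ (N * j - j))) ^ (2 ^ j) = y" by (simp add: pow_N_mult)
  thus "\<And>z. z ^ 2 ^ j = y \<Longrightarrow> z = y ^ 2 ^ (N * j - j)" using frob_inj by metis
qed

lemma pow2_split: "(x::'a) ^ (2 ^ T) = x * x ^ (2 ^ T - 1)"
proof -
  have "(2::nat) ^ T = Suc (2 ^ T - 1)" by simp
  thus ?thesis by (metis power_Suc)
qed

lemma nz_pow1: "(x::'a) \<noteq> 0 \<Longrightarrow> x \<in> Sf M \<Longrightarrow> x ^ (2 ^ M - 1) = 1"
  unfolding Sf_def using pow2_split[of x M] by auto

lemma nz_pow1_iff: "(x::'a) \<noteq> 0 \<Longrightarrow> (x ^ (2 ^ M) = x) = (x ^ (2 ^ M - 1) = 1)"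
  using pow2_split[of x M] by auto

lemma Sf_N: "Sf N = (UNIV :: 'a set)" by (auto simp: Sf_def pow_card)

lemma Sf_mult: "(x::'a) \<in> Sf M \<Longrightarrow> y \<in> Sf M \<Longrightarrow> x * y \<in> Sf M"
  by (auto simp: Sf_def power_mult_distrib)

lemma Sf_add: "(x::'a) \<in> Sf M \<Longrightarrow> y \<in> Sf M \<Longrightarrow> x + y \<in> Sf M"
  by (auto simp: Sf_def frob_add)

lemma Sf_inverse: "(x::'a) \<in> Sf M \<Longrightarrow> inverse x \<in> Sf M"
  by (auto simp: Sf_def power_inverse)

lemma Sf_divide: "(x::'a) \<in> Sf M \<Longrightarrow> y \<in> Sf M \<Longrightarrow> x / y \<in> Sf M"
  by (simp add: divide_inverse Sf_mult Sf_inverse)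

lemma Sf_0[simp]: "(0::'a) \<in> Sf M" by (simp add: Sf_def)
lemma Sf_1[simp]: "(1::'a) \<in> Sf M" by (simp add: Sf_def)

lemma fix_dvd: "g dvd A \<Longrightarrow> (x::'a) ^ (2 ^ g) = x \<Longrightarrow> x ^ (2 ^ A) = x"
  using pow_iter by (metis dvdE)

lemma fix_gcd:
  assumes "M \<noteq> 0" "(x::'a) ^ (2 ^ M) = x" "x ^ (2 ^ T) = x"
  shows "x ^ (2 ^ (gcd T M)) = x"
proof -
  obtain u v where uv: "M * u = T * v + gcd M T" using bezout_nat[OF assms(1)] by blast
  have "x = x ^ (2 ^ (M * u))" using pow_iter[OF assms(2)] by simp
  also have "\<dots> = (x ^ (2 ^ (T * v))) ^ (2 ^ gcd M T)" by (simp add: uv pow_shift)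
  also have "\<dots> = x ^ (2 ^ gcd M T)" using pow_iter[OF assms(3)] by simp
  finally show ?thesis by (simp add: gcd.commute)
qed

lemma Sf_inter: "M \<noteq> 0 \<Longrightarrow> {x \<in> Sf M. (x::'a) ^ (2 ^ T) = x} = Sf (gcd T M)"
  unfolding Sf_def using fix_gcd fix_dvd by (auto intro: fix_dvd[of "gcd T M"])

lemma Sf_sub: "g dvd M \<Longrightarrow> Sf g \<subseteq> (Sf M :: 'a set)"
  unfolding Sf_def using fix_dvd by auto

lemma pow_NE: "(2::nat) ^ N - 1 \<ge> 1"
proof -
  have "(2::nat) ^ N \<ge> 2 ^ 1" using N_pos by (intro power_increasing) auto
  thus ?thesis by simp
qed

lemma card_roots_D:
  assumes D1: "D \<ge> 1" and Ddvd: "D dvd 2 ^ N - 1"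
  shows "card {x::'a. x ^ D = 1} = D"
proof -
  define E where "E = (2 ^ N - 1) div D"
  have DE: "D * E = 2 ^ N - 1" using Ddvd by (simp add: E_def)
  hence E1: "E \<ge> 1" using pow_NE by (cases E) auto
  let ?A = "UNIV - {0::'a}"
  let ?K = "{x::'a. x ^ D = 1}"
  define f where "f = (\<lambda>x::'a. x ^ D)"
  have cA: "card ?A = 2 ^ N - 1" using cardF by (simp add: card_Diff_singleton)
  have fib: "card {z \<in> ?A. f z = f x} = card ?K" if "x \<in> ?A" for x
  proof -
    have "{z \<in> ?A. f z = f x} = (\<lambda>u. x * u) ` ?K"
    proof (rule equalityI; rule subsetI)
      fix z assume "z \<in> {z \<in> ?A. f z = f x}"
      hence "z \<noteq> 0" "z ^ D = x ^ D" by (auto simp: f_def)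
      hence "(z / x) ^ D = 1" using that by (simp add: power_divide)
      moreover have "z = x * (z / x)" using that by simp
      ultimately show "z \<in> (\<lambda>u. x * u) ` ?K" by blast
    next
      fix z assume "z \<in> (\<lambda>u. x * u) ` ?K"
      then obtain u where "u ^ D = 1" "z = x * u" by blast
      thus "z \<in> {z \<in> ?A. f z = f x}" using that D1 by (auto simp: f_def power_mult_distrib power_0_left)
    qed
    also have "card \<dots> = card ?K" by (rule card_image) (use that in \<open>auto intro: inj_onI\<close>)
    finally show ?thesis .
  qed
  have "card ?A = card (f ` ?A) * card ?K"
    by (rule card_fibers) (use fib in auto)
  hence eq: "card (f ` ?A) * card ?K = D * E" using cA DE by simp
  have "f ` ?A \<subseteq> {y. y ^ E = 1}"
  proof
    fix y assume "y \<in> f ` ?A"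
    then obtain x where "x \<noteq> 0" "y = x ^ D" by (auto simp: f_def)
    hence "y ^ E = x ^ (2 ^ N - 1)" by (simp add: power_mult[symmetric] DE)
    thus "y \<in> {y. y ^ E = 1}" using nz_pow1[OF \<open>x \<noteq> 0\<close>] Sf_N by simp
  qed
  hence "card (f ` ?A) \<le> card {y::'a. y ^ E = 1}"
    by (intro card_mono) simp_all
  hence imle: "card (f ` ?A) \<le> E"
    using card_roots_pow[OF E1, where 'a='a] by linarith
  have Kle: "card ?K \<le> D" by (rule card_roots_pow[OF D1])
  show ?thesis
  proof (rule ccontr)
    assume "card ?K \<noteq> D"
    hence "card ?K < D" using Kle by simp
    have "card (f ` ?A) * card ?K \<le> E * card ?K" by (rule mult_le_mono1[OF imle])
    also have "E * card ?K < E * D" using E1 \<open>card ?K < D\<close> by simp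
    finally have "card (f ` ?A) * card ?K < E * D" .
    thus False using eq by (simp add: mult.commute)
  qed
qed

lemma card_Sf:
  assumes "g dvd N"
  shows "card (Sf g :: 'a set) = 2 ^ g"
proof -
  have g1: "g \<ge> 1" using assms N_pos by (metis dvd_0_left_iff less_one not_less not_one_le_zero)
  have D1: "(2::nat) ^ g - 1 \<ge> 1"
  proof -
    have "(2::nat) ^ g \<ge> 2 ^ 1" using g1 by (intro power_increasing) auto
    thus ?thesis by simp
  qed
  have mem: "x \<in> Sf g \<longleftrightarrow> x = 0 \<or> x ^ (2 ^ g - 1) = 1" for x :: 'a
  proof (cases "x = 0")
    case True thus ?thesis by (simp add: Sf_def)
  next
    case False thus ?thesis using nz_pow1_iff[of x g] by (simp add: Sf_def)
  qed
  have "Sf g = insert 0 {x::'a. x ^ (2 ^ g - 1) = 1}"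
    by (auto simp: mem)
  moreover have "(0::'a) \<notin> {x::'a. x ^ (2 ^ g - 1) = 1}" using D1 by (simp add: power_0_left)
  ultimately have "card (Sf g :: 'a set) = Suc (card {x::'a. x ^ (2 ^ g - 1) = 1})"
    by simp
  also have "card {x::'a. x ^ (2 ^ g - 1) = 1} = 2 ^ g - 1"
    by (rule card_roots_D[OF D1 mersenne_dvd[OF assms]])
  finally show ?thesis using D1 by simp
qed

lemma dvd_N_pos: "M dvd N \<Longrightarrow> M \<ge> 1"
  using N_pos by (metis dvd_0_left_iff less_one not_less not_one_le_zero)

lemma two_pow_ge1: "g \<ge> 1 \<Longrightarrow> (2::nat) ^ g - 1 \<ge> 1"
proof -
  assume "g \<ge> 1"
  hence "(2::nat) ^ g \<ge> 2 ^ 1" by (intro power_increasing) auto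
  thus ?thesis by simp
qed

lemma gcd_facts:
  assumes "M dvd N"
  shows "gcd T M \<ge> 1" "gcd T M dvd N" "(2 ^ gcd T M - 1) * ((2 ^ M - 1) div (2 ^ gcd T M - 1)) = 2 ^ M - (1::nat)"
    "(2::nat) ^ gcd T M - 1 dvd 2 ^ T - 1" "(2::nat) ^ M - 1 \<ge> 1" "(2 ^ M - 1) div (2 ^ gcd T M - 1) \<ge> (1::nat)"
proof -
  have M1: "M \<ge> 1" using dvd_N_pos[OF assms] .
  show g1: "gcd T M \<ge> 1" using M1 by (simp add: Suc_le_eq)
  show "gcd T M dvd N" using assms by (meson dvd_trans gcd_dvd2)
  show DE: "(2 ^ gcd T M - 1) * ((2 ^ M - 1) div (2 ^ gcd T M - 1)) = 2 ^ M - (1::nat)"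
    using mersenne_dvd[of "gcd T M" M] by simp
  show "(2::nat) ^ gcd T M - 1 dvd 2 ^ T - 1" by (rule mersenne_dvd) simp
  show M2: "(2::nat) ^ M - 1 \<ge> 1" by (rule two_pow_ge1[OF M1])
  show "(2 ^ M - 1) div (2 ^ gcd T M - 1) \<ge> (1::nat)"
  proof (rule ccontr)
    assume "\<not> (2 ^ M - 1) div (2 ^ gcd T M - 1) \<ge> (1::nat)"
    hence "(2 ^ M - 1) div (2 ^ gcd T M - 1) = (0::nat)" by simp
    thus False using DE M2 by simp
  qed
qed

lemma pow_PE_1:
  assumes M: "M dvd N" and x: "(x::'a) \<in> Sf M" "x \<noteq> 0"
    and E: "E = (2 ^ M - 1) div (2 ^ gcd T M - 1)"
  shows "x ^ ((2 ^ T - 1) * E) = 1"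
proof -
  obtain s where s: "(2::nat) ^ T - 1 = (2 ^ gcd T M - 1) * s"
    using gcd_facts(4)[OF M] by blast
  have "(2 ^ T - 1) * E = ((2 ^ gcd T M - 1) * s) * E" by (simp only: s)
  also have "\<dots> = s * ((2 ^ gcd T M - 1) * E)" by (simp only: mult.commute mult.left_commute)
  also have "(2 ^ gcd T M - 1) * E = 2 ^ M - 1" using gcd_facts(3)[OF M, of T] by (simp only: E)
  finally have "(2 ^ T - 1) * E = (2 ^ M - 1) * s" by (simp only: mult.commute)
  hence "x ^ ((2 ^ T - 1) * E) = (x ^ (2 ^ M - 1)) ^ s" by (simp add: power_mult)
  thus ?thesis using nz_pow1[OF x(2,1)] by simp
qed

lemma pow_TE:
  assumes M: "M dvd N" and x: "(x::'a) \<in> Sf M" "x \<noteq> 0"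
    and E: "E = (2 ^ M - 1) div (2 ^ gcd T M - 1)"
  shows "x ^ (2 ^ T * E) = x ^ E"
proof -
  have "(2::nat) ^ T * E = (2 ^ T - 1) * E + E"
    by (simp add: diff_mult_distrib)
  hence "x ^ (2 ^ T * E) = x ^ ((2 ^ T - 1) * E) * x ^ E" by (simp add: power_add)
  thus ?thesis using pow_PE_1[OF assms] by simp
qed

lemma solve_T:
  assumes M: "M dvd N" and c: "(c::'a) ^ E = 1"
    and E: "E = (2 ^ M - 1) div (2 ^ gcd T M - 1)"
  shows "\<exists>w \<in> Sf M. w \<noteq> 0 \<and> w ^ (2 ^ T) = c * w"
proof -
  define g where "g = gcd T M"
  have M1: "M \<ge> 1" using dvd_N_pos[OF M] .
  have g1: "g \<ge> 1" and gN: "g dvd N" and DE: "(2 ^ g - 1) * E = 2 ^ M - 1"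
    and E1: "E \<ge> 1"
    using gcd_facts(1)[OF M, of T] gcd_facts(2)[OF M, of T] gcd_facts(3)[OF M, of T] gcd_facts(6)[OF M, of T] by (simp_all add: g_def E)
  have gM: "g dvd M" and gT: "g dvd T" by (simp_all add: g_def)
  define P where "P = (2::nat) ^ T - 1"
  let ?A = "Sf M - {0::'a}"
  define f where "f = (\<lambda>x::'a. x ^ P)"
  have cA: "card ?A = 2 ^ M - 1" using card_Sf[OF M] by (simp add: card_Diff_singleton)
  have cg: "card (Sf g - {0::'a}) = 2 ^ g - 1" using card_Sf[OF gN] by (simp add: card_Diff_singleton)
  have inter: "{x \<in> Sf M. (x::'a) ^ (2 ^ T) = x} = Sf g"
    using Sf_inter[of M T] M1 by (simp add: g_def)
  have fib: "card {z \<in> ?A. f z = f x} = 2 ^ g - 1" if x: "x \<in> ?A" for x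
  proof -
    have x0: "x \<noteq> 0" "x \<in> Sf M" using x by auto
    have "{z \<in> ?A. f z = f x} = (\<lambda>u. x * u) ` (Sf g - {0})"
    proof (rule equalityI; rule subsetI)
      fix z assume "z \<in> {z \<in> ?A. f z = f x}"
      hence z: "z \<noteq> 0" "z \<in> Sf M" "z ^ P = x ^ P" by (auto simp: f_def)
      define u where "u = z / x"
      have u: "u \<in> Sf M" "u \<noteq> 0" using z x0 Sf_divide by (auto simp: u_def)
      have "u ^ P = 1" using z x0 by (simp add: u_def power_divide)
      hence "u ^ (2 ^ T) = u" using pow2_split[of u T] by (simp add: P_def)
      hence "u \<in> Sf g" using u inter by blast
      moreover have "z = x * u" using x0 by (simp add: u_def)
      ultimately show "z \<in> (\<lambda>u. x * u) ` (Sf g - {0})" using u by blast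
    next
      fix z assume "z \<in> (\<lambda>u. x * u) ` (Sf g - {0})"
      then obtain u where u: "u \<in> Sf g" "u \<noteq> 0" "z = x * u" by blast
      have uM: "u \<in> Sf M" using Sf_sub[OF gM] u by blast
      have "u ^ (2 ^ T) = u" using u inter by blast
      hence "u ^ P = 1" using pow2_split[of u T] u by (simp add: P_def)
      hence "f z = f x" by (simp add: f_def u power_mult_distrib)
      moreover have "z \<in> ?A" using u uM x0 Sf_mult by auto
      ultimately show "z \<in> {z \<in> ?A. f z = f x}" by blast
    qed
    also have "card \<dots> = card (Sf g - {0::'a})"
      by (rule card_image) (use x0 in \<open>auto intro: inj_onI\<close>)
    finally show ?thesis using cg by simp
  qed
  have "card ?A = card (f ` ?A) * (2 ^ g - 1)"
    by (rule card_fibers) (use fib in auto)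
  hence "card (f ` ?A) * (2 ^ g - 1) = 2 ^ M - 1" using cA by simp
  hence "card (f ` ?A) * (2 ^ g - 1) = E * (2 ^ g - 1)"
    using DE by (simp only: mult.commute)
  hence cim: "card (f ` ?A) = E" using two_pow_ge1[OF g1] by (simp; linarith)
  have sub: "f ` ?A \<subseteq> {y. y ^ E = 1}"
  proof
    fix y assume "y \<in> f ` ?A"
    then obtain x where "x \<in> Sf M" "x \<noteq> 0" "y = x ^ P" by (auto simp: f_def)
    thus "y \<in> {y. y ^ E = 1}"
      using pow_PE_1[OF M \<open>x \<in> Sf M\<close> \<open>x \<noteq> 0\<close> E] by (simp add: P_def power_mult)
  qed
  have "card {y::'a. y ^ E = 1} \<le> E" by (rule card_roots_pow[OF E1])
  moreover have "card (f ` ?A) \<le> card {y::'a. y ^ E = 1}" by (intro card_mono) (simp_all add: sub)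
  ultimately have "f ` ?A = {y. y ^ E = 1}"
    using sub cim by (intro card_subset_eq) simp_all
  hence "c \<in> f ` ?A" using c by simp
  then obtain w where w: "w \<in> Sf M" "w \<noteq> 0" "c = w ^ P" by (auto simp: f_def)
  have "w ^ (2 ^ T) = c * w" using pow2_split[of w T] w by (simp add: P_def mult.commute)
  thus ?thesis using w by blast
qed

lemma kerG:
  assumes e1: "e \<ge> 1" and dr: "d = e * r" and dN: "d dvd N" and r1: "r \<ge> 1"
  shows "card {z \<in> Sf d. (\<Sum>i<r. z ^ (2 ^ (e * i))) = (0::'a)} = 2 ^ (d - e)"
proof -
  define G where "G = (\<lambda>z::'a. \<Sum>i<r. z ^ (2 ^ (e * i)))"
  define ker where "ker = {z \<in> Sf d. G z = 0}"
  have Gadd: "G (x + y) = G x + G y" for x y by (simp add: G_def frob_add sum.distrib)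
  have ed: "e dvd d" using dr by simp
  have eN: "e dvd N" using ed dN by (rule dvd_trans)
  have GS: "G z \<in> Sf e" if z: "z \<in> Sf d" for z
  proof -
    have "G z ^ (2 ^ e) = (\<Sum>i<r. z ^ (2 ^ (e * Suc i)))"
      by (simp add: G_def frob_sum pow_shift[symmetric] algebra_simps del: power_Suc)
    also have "\<dots> = (\<Sum>i<r. z ^ (2 ^ (e * i)))"
      by (rule cyc_shift[where h = "\<lambda>i. z ^ (2 ^ (e * i))"]) (use z dr in \<open>simp add: Sf_def\<close>)
    finally show ?thesis by (simp add: Sf_def G_def)
  qed
  have fib: "card {z \<in> Sf d. G z = G x} = card ker" if x: "x \<in> Sf d" for x
  proof -
    have "{z \<in> Sf d. G z = G x} = (\<lambda>u. x + u) ` ker"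
    proof (rule equalityI; rule subsetI)
      fix z assume "z \<in> {z \<in> Sf d. G z = G x}"
      hence z: "z \<in> Sf d" "G z = G x" by auto
      have "G (z + x) = 0" using z by (simp add: Gadd plus_eq0)
      moreover have "z + x \<in> Sf d" using z x Sf_add by blast
      moreover have "z = x + (z + x)" by (simp add: add.assoc[symmetric] add.commute)
      ultimately show "z \<in> (\<lambda>u. x + u) ` ker" unfolding ker_def by blast
    next
      fix z assume "z \<in> (\<lambda>u. x + u) ` ker"
      then obtain u where u: "u \<in> Sf d" "G u = 0" "z = x + u" unfolding ker_def by blast
      thus "z \<in> {z \<in> Sf d. G z = G x}" using x Sf_add by (auto simp: Gadd)
    qed
    also have "card \<dots> = card ker" by (rule card_image) (auto intro: inj_onI)
    finally show ?thesis .
  qed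
  have "card (Sf d :: 'a set) = card (G ` Sf d) * card ker"
    by (rule card_fibers) (use fib in auto)
  hence eq: "card (G ` Sf d) * card ker = 2 ^ e * 2 ^ (e * (r - 1))"
    using card_Sf[OF dN] dr r1 by (simp add: power_add[symmetric] algebra_simps)
  have "card (G ` Sf d) \<le> card (Sf e :: 'a set)" by (intro card_mono) (auto simp: GS)
  hence imle: "card (G ` Sf d) \<le> 2 ^ e" using card_Sf[OF eN] by simp
  obtain r' where r': "r = Suc r'" using r1 by (cases r) auto
  define P where "P = (\<Sum>i<r. monom (1::'a) (2 ^ (e * i)))"
  have dP: "degree P = 2 ^ (e * (r - 1))" using degree_sum_monom[OF e1, of r'] by (simp add: P_def r')
  hence "P \<noteq> 0" by (metis degree_0 zero_less_power pos2 less_irrefl)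
  hence "card {x. poly P x = 0} \<le> degree P" by (rule card_poly_roots_bound)
  moreover have "ker \<subseteq> {x. poly P x = 0}" by (auto simp: ker_def P_def G_def poly_sum poly_monom)
  hence "card ker \<le> card {x. poly P x = 0}" by (intro card_mono) simp_all
  ultimately have kle: "card ker \<le> 2 ^ (e * (r - 1))" using dP by simp
  have "card ker = 2 ^ (e * (r - 1))"
  proof (rule ccontr)
    assume "card ker \<noteq> 2 ^ (e * (r - 1))"
    hence "card ker < 2 ^ (e * (r - 1))" using kle by simp
    have "card (G ` Sf d) * card ker \<le> 2 ^ e * card ker" by (rule mult_le_mono1[OF imle])
    also have "\<dots> < 2 ^ e * 2 ^ (e * (r - 1))" using \<open>card ker < _\<close> by simp
    finally show False using eq by simp
  qed
  moreover have "d - e = e * (r - 1)" using dr r1 by (simp add: diff_mult_distrib2)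
  ultimately show ?thesis by (simp add: ker_def G_def)
qed

lemma abs_trace_eq: "abs_trace m n (x::'a) = (\<Sum>i<n. x ^ (2 ^ (m * i)))"
  by (simp add: abs_trace_def rel_trace_def power_mult)

lemma rel_trace_eq: "rel_trace m n r (x::'a) = (\<Sum>s<n div r. x ^ (2 ^ (m * (r * s))))"
  by (simp add: rel_trace_def power_mult)

lemma pow_comm: "((x::'a) ^ (2 ^ A)) ^ (2 ^ B) = (x ^ (2 ^ B)) ^ (2 ^ A)"
  by (simp add: pow_shift[symmetric] add.commute)

lemma tr_add: "(\<Sum>i<n. ((x::'a) + y) ^ (2 ^ (m * i))) = (\<Sum>i<n. x ^ (2 ^ (m * i))) + (\<Sum>i<n. y ^ (2 ^ (m * i)))"
  by (simp add: frob_add sum.distrib)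

lemma tr_scal: "(c::'a) \<in> Sf m \<Longrightarrow> (\<Sum>i<n. (c * x) ^ (2 ^ (m * i))) = c * (\<Sum>i<n. x ^ (2 ^ (m * i)))"
  by (simp add: power_mult_distrib sum_distrib_left pow_iter Sf_def)

lemma tr_frob: "(\<Sum>i<n. (x::'a) ^ (2 ^ (m * i))) ^ (2 ^ j) = (\<Sum>i<n. (x ^ (2 ^ j)) ^ (2 ^ (m * i)))"
  by (simp add: frob_sum pow_comm)

lemma tr_Sf:
  assumes "N = m * n"
  shows "(\<Sum>i<n. (x::'a) ^ (2 ^ (m * i))) \<in> Sf m"
proof -
  have "(\<Sum>i<n. x ^ (2 ^ (m * i))) ^ (2 ^ m) = (\<Sum>i<n. x ^ (2 ^ (m * Suc i)))"
    by (simp add: frob_sum pow_shift[symmetric] algebra_simps del: power_Suc)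
  also have "\<dots> = (\<Sum>i<n. x ^ (2 ^ (m * i)))"
    by (rule cyc_shift[where h = "\<lambda>i. x ^ (2 ^ (m * i))"]) (use assms pow_card in simp)
  finally show ?thesis by (simp add: Sf_def)
qed

lemma tr_block:
  assumes r: "r dvd n" "r \<ge> 1" and y: "(y::'a) ^ (2 ^ (m * r)) = y"
  shows "(\<Sum>i<n. (x * y) ^ (2 ^ (m * i))) = (\<Sum>j<r. (y * (\<Sum>s<n div r. x ^ (2 ^ (m * (r * s))))) ^ (2 ^ (m * j)))"
proof -
  define f where "f = (\<lambda>i. (x * y) ^ (2 ^ (m * i)))"
  have n: "n = (n div r) * r" using r by simp
  have "(\<Sum>i<n. f i) = (\<Sum>s<n div r. sum f {s * r..<s * r + r})"
    using sum.nat_group[of f r "n div r"] n by simp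
  also have "\<dots> = (\<Sum>s<n div r. \<Sum>j<r. (x ^ (2 ^ (m * (r * s)))) ^ (2 ^ (m * j)) * y ^ (2 ^ (m * j)))"
  proof (rule sum.cong[OF refl])
    fix s
    have "sum f {s * r..<s * r + r} = sum f {0 + s * r..<r + s * r}" by (simp add: add.commute)
    also have "\<dots> = (\<Sum>j<r. f (j + s * r))"
      by (subst sum.shift_bounds_nat_ivl) (simp add: atLeast0LessThan)
    also have "\<dots> = (\<Sum>j<r. (x ^ (2 ^ (m * (r * s)))) ^ (2 ^ (m * j)) * y ^ (2 ^ (m * j)))"
    proof (rule sum.cong[OF refl])
      fix j
      have e: "m * (j + s * r) = m * (r * s) + m * j" by (simp add: algebra_simps)
      have "y ^ (2 ^ (m * (r * s))) = y" using pow_iter[OF y, of s] by (simp add: mult.assoc)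
      hence "y ^ (2 ^ (m * (j + s * r))) = y ^ (2 ^ (m * j))" by (simp add: e pow_shift)
      thus "f (j + s * r) = (x ^ (2 ^ (m * (r * s)))) ^ (2 ^ (m * j)) * y ^ (2 ^ (m * j))"
        by (simp add: f_def power_mult_distrib e pow_shift)
    qed
    finally show "sum f {s * r..<s * r + r} = \<dots>" .
  qed
  also have "\<dots> = (\<Sum>j<r. \<Sum>s<n div r. (x ^ (2 ^ (m * (r * s)))) ^ (2 ^ (m * j)) * y ^ (2 ^ (m * j)))"
    by (rule sum.swap)
  also have "\<dots> = (\<Sum>j<r. (y * (\<Sum>s<n div r. x ^ (2 ^ (m * (r * s))))) ^ (2 ^ (m * j)))"
    by (simp add: power_mult_distrib frob_sum sum_distrib_left mult.commute)
  finally show ?thesis by (simp add: f_def)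
qed

lemma adj_iff: "(adjoint_L a b k l (x::'a) = 0) = ((a * x) ^ (2 ^ (N * k - k + l)) = b * x)"
proof -
  have Nk: "N * k \<ge> k" "N * l \<ge> l" using N_pos by simp_all
  have "(adjoint_L a b k l x = 0) = (frob_inv k (a * x) = frob_inv l (b * x))"
    by (simp add: adjoint_L_def plus_eq0)
  also have "\<dots> = ((frob_inv k (a * x)) ^ (2 ^ l) = (frob_inv l (b * x)) ^ (2 ^ l))"
    by (simp add: frob_inj_iff)
  also have "(frob_inv k (a * x)) ^ (2 ^ l) = (a * x) ^ (2 ^ (N * k - k + l))"
    by (simp add: frob_inv_eq pow_shift)
  also have "(frob_inv l (b * x)) ^ (2 ^ l) = (b * x) ^ (2 ^ (N * l))"
    using Nk by (simp add: frob_inv_eq pow_shift[symmetric])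
  also have "\<dots> = b * x" by (rule pow_N_mult)
  finally show ?thesis .
qed

lemma easy_dir:
  assumes M: "M dvd N" and ab: "(a::'a) \<in> Sf M" "b \<in> Sf M" and x: "x \<in> Sf M" "x \<noteq> 0"
    and K: "(a * x) ^ (2 ^ T) = b * x"
    and E: "E = (2 ^ M - 1) div (2 ^ gcd T M - 1)"
  shows "a ^ E = b ^ E"
proof (cases "a = 0")
  case True
  hence "b * x = 0" using K by (simp add: power_0_left)
  hence "b = 0" using x by simp
  thus ?thesis using True by simp
next
  case False
  have ax: "a * x \<in> Sf M" "a * x \<noteq> 0" using ab x False Sf_mult by auto
  have "(a * x) ^ E = (a * x) ^ (2 ^ T * E)" using pow_TE[OF M ax E] by simp
  also have "\<dots> = (b * x) ^ E" by (simp add: power_mult K)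
  finally have "a ^ E * x ^ E = b ^ E * x ^ E" by (simp add: power_mult_distrib)
  thus ?thesis using x by simp
qed

lemma Kstruct:
  assumes x0: "(x0::'a) \<noteq> 0" "(a * x0) ^ (2 ^ T) = b * x0" and b: "b \<noteq> 0"
  shows "{x. (a * x) ^ (2 ^ T) = b * x} = (\<lambda>y. x0 * y) ` Sf (gcd T N)"
proof -
  have inter: "{y. (y::'a) ^ (2 ^ T) = y} = Sf (gcd T N)"
    using Sf_inter[of N T] N_pos Sf_N by simp
  have key: "((a * (x0 * y)) ^ (2 ^ T) = b * (x0 * y)) = (y ^ (2 ^ T) = y)" for y
  proof -
    have "(a * (x0 * y)) ^ (2 ^ T) = (b * x0) * y ^ (2 ^ T)"
      using x0 by (simp add: power_mult_distrib mult.assoc[symmetric])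
    thus ?thesis using x0 b by (simp add: mult.assoc[symmetric])
  qed
  show ?thesis
  proof (rule equalityI; rule subsetI)
    fix x assume "x \<in> {x. (a * x) ^ (2 ^ T) = b * x}"
    hence "(a * (x0 * (x / x0))) ^ (2 ^ T) = b * (x0 * (x / x0))" using x0 by simp
    hence "x / x0 \<in> Sf (gcd T N)" using key inter by blast
    moreover have "x = x0 * (x / x0)" using x0 by simp
    ultimately show "x \<in> (\<lambda>y. x0 * y) ` Sf (gcd T N)" by blast
  next
    fix x assume "x \<in> (\<lambda>y. x0 * y) ` Sf (gcd T N)"
    then obtain y where "y \<in> Sf (gcd T N)" "x = x0 * y" by blast
    thus "x \<in> {x. (a * x) ^ (2 ^ T) = b * x}" using key inter by blast
  qed
qed

lemma count_mult:
  assumes "(x0::'a) \<noteq> 0"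
  shows "card {x. P x \<and> x \<in> (\<lambda>y. x0 * y) ` S} = card {y \<in> S. P (x0 * y)}"
proof -
  have "{x. P x \<and> x \<in> (\<lambda>y. x0 * y) ` S} = (\<lambda>y. x0 * y) ` {y \<in> S. P (x0 * y)}" by blast
  also have "card \<dots> = card {y \<in> S. P (x0 * y)}"
    by (rule card_image) (use assms in \<open>auto intro: inj_onI\<close>)
  finally show ?thesis .
qed

lemma reindex_tr:
  assumes e1: "e \<ge> 1" and dr: "d = e * r" and mu: "m = e * \<mu>" and cop: "coprime \<mu> r"
    and y: "(y::'a) ^ (2 ^ d) = y"
  shows "(\<Sum>j<r. y ^ (2 ^ (m * j))) = (\<Sum>i<r. y ^ (2 ^ (e * i)))"
proof -
  define h where "h = (\<lambda>i. y ^ (2 ^ (e * i)))"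
  have "y ^ (2 ^ (m * j)) = h (\<mu> * j mod r)" for j
  proof -
    have "y ^ (2 ^ (m * j)) = y ^ (2 ^ ((m * j) mod d))" by (rule pow_mod[OF y])
    also have "(m * j) mod d = e * (\<mu> * j mod r)" by (simp add: mu dr mult.assoc mod_mult_mult1)
    finally show ?thesis by (simp add: h_def)
  qed
  hence "(\<Sum>j<r. y ^ (2 ^ (m * j))) = (\<Sum>j<r. h (\<mu> * j mod r))" by simp
  also have "\<dots> = (\<Sum>i<r. h i)"
  proof (cases "r = 0")
    case True thus ?thesis by simp
  next
    case False
    have inj: "inj_on (\<lambda>j. \<mu> * j mod r) {..<r}"
    proof (rule inj_onI)
      fix i j assume ij: "i \<in> {..<r}" "j \<in> {..<r}" "\<mu> * i mod r = \<mu> * j mod r"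
      hence "[\<mu> * i = \<mu> * j] (mod r)" by (simp add: cong_def)
      hence "[i = j] (mod r)" using cong_mult_lcancel_nat[OF cop] by simp
      thus "i = j" using ij by (simp add: cong_def)
    qed
    have "(\<lambda>j. \<mu> * j mod r) ` {..<r} \<subseteq> {..<r}" using False by auto
    hence bij: "(\<lambda>j. \<mu> * j mod r) ` {..<r} = {..<r}"
      using endo_inj_surj[OF _ _ inj] by simp
    have "(\<Sum>i<r. h i) = (\<Sum>i\<in>(\<lambda>j. \<mu> * j mod r) ` {..<r}. h i)" by (simp add: bij)
    also have "\<dots> = (\<Sum>j<r. h (\<mu> * j mod r))" by (rule sum.reindex[OF inj, unfolded comp_def])
    finally show ?thesis by simp
  qed
  finally show ?thesis by (simp add: h_def)
qed

lemma Sf_pow: "(a::'a) \<in> Sf M \<Longrightarrow> a ^ j \<in> Sf M"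
proof -
  assume "a \<in> Sf M"
  moreover have "(a ^ j) ^ (2 ^ M) = (a ^ (2 ^ M)) ^ j" by (simp only: power_mult[symmetric] mult.commute)
  ultimately show ?thesis by (simp add: Sf_def)
qed

lemma of_nat_parity: "even j \<Longrightarrow> (of_nat j :: 'a) = 0" "odd j \<Longrightarrow> (of_nat j :: 'a) = 1"
proof -
  show "even j \<Longrightarrow> (of_nat j :: 'a) = 0" by (auto simp: mult_2[symmetric] char2 elim!: evenE)
  show "odd j \<Longrightarrow> (of_nat j :: 'a) = 1" by (auto simp: mult_2[symmetric] char2 elim!: oddE)
qed

end

theorem mainTheorem2:
  fixes a b :: "'a::{field,finite}" and m n k l d e r :: nat
  assumes hm: "m \<ge> 1" and hn: "n \<ge> 1"
    and hcard: "card (UNIV :: 'a set) = 2 ^ (m * n)"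
    and hL: "\<exists>x::'a. a * x ^ (2 ^ k) + b * x ^ (2 ^ l) \<noteq> 0"
    and hd: "d = nat (gcd (int l - int k) (int (m * n)))"
    and he: "e = nat (gcd (int l - int k) (int m))"
    and hr: "r = d div e"
  shows
    "(a ^ ((2 ^ (m * n) - 1) div (2 ^ d - 1)) \<noteq> b ^ ((2 ^ (m * n) - 1) div (2 ^ d - 1)) \<longrightarrow>
        card {x::'a. abs_trace m n x = 0 \<and> adjoint_L a b k l x = 0} = 1)
     \<and>
     (a ^ ((2 ^ (m * n) - 1) div (2 ^ d - 1)) = b ^ ((2 ^ (m * n) - 1) div (2 ^ d - 1)) \<longrightarrow>
       ([k = l] (mod m) \<and> a + b \<in> subfield_q m \<longrightarrow>
          card {x::'a. abs_trace m n x = 0 \<and> adjoint_L a b k l x = 0} =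
            (if a + b \<noteq> 0 \<or> (a + b = 0 \<and> rel_trace m n r (inverse a) = 0)
             then 2 ^ d else (2 ^ m) ^ (r - 1)))
       \<and>
       (\<not> [k = l] (mod m) \<and> a \<in> subfield_q m \<and> b \<in> subfield_q m \<longrightarrow>
          card {x::'a. abs_trace m n x = 0 \<and> adjoint_L a b k l x = 0} =
            (if a ^ ((2 ^ m - 1) div (2 ^ e - 1)) \<noteq> b ^ ((2 ^ m - 1) div (2 ^ e - 1))
                \<or> even (n div r)
             then 2 ^ d else 2 ^ (d - e))))"
proof -
  define N where "N = m * n"
  have cF: "card (UNIV :: 'a set) = 2 ^ N" using hcard by (simp add: N_def)
  have N1: "N \<ge> 1" by (rule N_pos[OF cF])
  have mN: "m dvd N" by (simp add: N_def)
  define T where "T = N * k - k + l"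
  have Nk: "N * k \<ge> k" using N1 by simp
  have i1: "int (N * k - k) = int N * int k - int k" using Nk by (simp add: of_nat_diff)
  have intT: "int T = int k * int N + (int l - int k)"
    unfolding T_def using i1 by (simp add: algebra_simps)
  have dT: "d = gcd T N"
  proof -
    have "gcd (int l - int k) (int N) = gcd (int N) (int k * int N + (int l - int k))"
      by (simp add: gcd_add_mult gcd.commute)
    also have "\<dots> = int (gcd N T)" by (simp add: intT[symmetric])
    finally show ?thesis using hd by (simp add: N_def gcd.commute)
  qed
  have eT: "e = gcd T m"
  proof -
    have iT: "int T = (int k * int n) * int m + (int l - int k)" using intT by (simp add: N_def)
    have "gcd (int l - int k) (int m) = gcd (int m) ((int k * int n) * int m + (int l - int k))"
      by (simp add: gcd_add_mult gcd.commute)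
    also have "\<dots> = int (gcd m T)" by (simp add: iT[symmetric])
    finally show ?thesis using he by (simp add: gcd.commute)
  qed
  define tr where "tr = (\<lambda>x::'a. \<Sum>i<n. x ^ (2 ^ (m * i)))"
  define K where "K = {x::'a. (a * x) ^ (2 ^ T) = b * x}"
  have setK: "{x::'a. abs_trace m n x = 0 \<and> adjoint_L a b k l x = 0} = {x. tr x = 0 \<and> x \<in> K}"
    by (simp add: abs_trace_eq[OF cF] tr_def adj_iff[OF cF] K_def T_def)
  have tr0: "tr 0 = 0" by (simp add: tr_def power_0_left)
  have ab: "a \<noteq> 0 \<or> b \<noteq> 0" using hL by auto
  define E :: nat where "E = (2 ^ N - 1) div (2 ^ d - 1)"
  have E_alt: "E = (2 ^ N - 1) div (2 ^ gcd T N - 1)" by (simp add: E_def dT)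
  have E1: "E \<ge> 1" using gcd_facts(6)[OF cF dvd_refl, of T] by (simp add: E_alt)
  have SN: "Sf N = (UNIV :: 'a set)" by (rule Sf_N[OF cF])
  have d1: "d \<ge> 1" and dN: "d dvd N" and dTd: "d dvd T"
    using gcd_facts(1,2)[OF cF dvd_refl, of T] by (simp_all add: dT)
  have cardSd: "card (Sf d :: 'a set) = 2 ^ d" by (rule card_Sf[OF cF dN])
  have part1: "card {x. tr x = 0 \<and> x \<in> K} = 1" if hne: "a ^ E \<noteq> b ^ E"
  proof -
    have "K = {0}"
    proof (rule equalityI; rule subsetI)
      fix x assume "x \<in> K"
      show "x \<in> {0}"
      proof (rule ccontr)
        assume "x \<notin> {0}"
        hence "a ^ E = b ^ E"
          using easy_dir[OF cF dvd_refl, of a b x T E] \<open>x \<in> K\<close> SN by (simp add: K_def E_alt)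
        thus False using hne by simp
      qed
    qed (simp add: K_def power_0_left)
    hence "{x. tr x = 0 \<and> x \<in> K} = {0}" using tr0 by auto
    thus ?thesis by simp
  qed
  have part2: "([k = l] (mod m) \<and> a + b \<in> subfield_q m \<longrightarrow>
          card {x. tr x = 0 \<and> x \<in> K} =
            (if a + b \<noteq> 0 \<or> (a + b = 0 \<and> rel_trace m n r (inverse a) = 0)
             then 2 ^ d else (2 ^ m) ^ (r - 1)))
       \<and>
       (\<not> [k = l] (mod m) \<and> a \<in> subfield_q m \<and> b \<in> subfield_q m \<longrightarrow>
          card {x. tr x = 0 \<and> x \<in> K} =
            (if a ^ ((2 ^ m - 1) div (2 ^ e - 1)) \<noteq> b ^ ((2 ^ m - 1) div (2 ^ e - 1))
                \<or> even (n div r)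
             then 2 ^ d else 2 ^ (d - e)))" if hE: "a ^ E = b ^ E"
  proof -
    have a0: "a \<noteq> 0"
    proof
      assume "a = 0"
      hence "b ^ E = 0" using hE E1 by (simp add: power_0_left)
      hence "b = 0" by simp
      thus False using ab \<open>a = 0\<close> by simp
    qed
    have b0: "b \<noteq> 0"
    proof
      assume "b = 0"
      hence "a ^ E = 0" using hE E1 by (simp add: power_0_left)
      hence "a = 0" by simp
      thus False using ab \<open>b = 0\<close> by simp
    qed
    define c where "c = b / a ^ (2 ^ T)"
    have aTE: "a ^ (2 ^ T * E) = a ^ E" using pow_TE[OF cF dvd_refl _ a0 E_alt] SN by simp
    have "c ^ E = b ^ E / a ^ (2 ^ T * E)" by (simp add: c_def power_divide power_mult)
    also have "\<dots> = 1" using aTE hE a0 b0 by simp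
    finally have cE: "c ^ E = 1" .
    obtain w where w: "w \<noteq> 0" "w ^ (2 ^ T) = c * w" using solve_T[OF cF dvd_refl cE E_alt] by blast
    have wK: "(a * w) ^ (2 ^ T) = b * w" using w a0 by (simp add: power_mult_distrib c_def)
    have Kw: "K = (\<lambda>y. w * y) ` Sf d" using Kstruct[OF cF w(1) wK b0] by (simp add: K_def dT)
    have cardK: "card K = 2 ^ d"
    proof -
      have "card K = card (Sf d :: 'a set)" unfolding Kw
        by (rule card_image) (use w in \<open>auto intro: inj_onI\<close>)
      thus ?thesis using cardSd by simp
    qed
    have allK: "card {x. tr x = 0 \<and> x \<in> K} = 2 ^ d" if "\<forall>x\<in>K. tr x = 0"
    proof -
      have "{x. tr x = 0 \<and> x \<in> K} = K" using that by blast
      thus ?thesis using cardK by simp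
    qed
    show ?thesis
    proof (intro conjI impI)
      assume C2: "[k = l] (mod m) \<and> a + b \<in> subfield_q m"
      have mT: "m dvd T"
      proof -
        have "[int k = int l] (mod int m)" using C2 by (simp add: cong_int_iff)
        hence "int m dvd int l - int k" by (simp add: cong_iff_dvd_diff dvd_diff_commute)
        moreover have "int T = (int k * int n) * int m + (int l - int k)" using intT by (simp add: N_def)
        ultimately have "int m dvd int T" by simp
        thus ?thesis by simp
      qed
      have em: "e = m" using eT mT by simp
      have mdd: "m dvd d" using mT mN by (simp add: dT)
      have dmr: "d = m * r" using hr em mdd by simp
      have r1: "r \<ge> 1" using dmr d1 by (cases r) auto
      have rn: "r dvd n" using dN dmr hm by (simp add: N_def)
      have abq: "a + b \<in> Sf m" using C2 by (simp add: subfield_q_def Sf_def)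
      show "card {x. tr x = 0 \<and> x \<in> K} =
            (if a + b \<noteq> 0 \<or> (a + b = 0 \<and> rel_trace m n r (inverse a) = 0)
             then 2 ^ d else (2 ^ m) ^ (r - 1))"
      proof (cases "a + b = 0")
        case False
        have "\<forall>x\<in>K. tr x = 0"
        proof
          fix x assume "x \<in> K"
          hence Kx: "(a * x) ^ (2 ^ T) = b * x" by (simp add: K_def)
          have "tr (b * x) = tr ((a * x) ^ (2 ^ T))" using Kx by simp
          also have "\<dots> = (tr (a * x)) ^ (2 ^ T)" by (simp add: tr_def tr_frob[OF cF])
          also have "\<dots> = tr (a * x)"
            using tr_Sf[OF cF N_def, of "a * x"] fix_dvd[OF cF mT] by (simp add: tr_def Sf_def)
          finally have "tr ((a + b) * x) = 0"
            by (simp add: tr_def distrib_right tr_add[OF cF] char2[OF cF])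
          hence "(a + b) * tr x = 0" using tr_scal[OF cF abq] by (simp add: tr_def)
          thus "tr x = 0" using False by simp
        qed
        thus ?thesis using allK False by simp
      next
        case True
        hence ba: "b = a" using plus_eq0[OF cF] by simp
        have ia: "(a * inverse a) ^ (2 ^ T) = b * inverse a" using a0 ba by simp
        have ia0: "inverse a \<noteq> 0" using a0 by simp
        have Ki: "K = (\<lambda>y. inverse a * y) ` Sf d" using Kstruct[OF cF ia0 ia b0] by (simp add: K_def dT)
        have cnt: "card {x. tr x = 0 \<and> x \<in> K} = card {y \<in> Sf d. tr (inverse a * y) = 0}"
          unfolding Ki by (rule count_mult[OF cF ia0])
        define \<tau> where "\<tau> = rel_trace m n r (inverse a)"
        have \<tau>_eq: "\<tau> = (\<Sum>s<n div r. (inverse a) ^ (2 ^ (m * (r * s))))"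
          by (simp add: \<tau>_def rel_trace_eq[OF cF])
        have blk: "tr (inverse a * y) = (\<Sum>j<r. (y * \<tau>) ^ (2 ^ (m * j)))" if "y \<in> Sf d" for y
          using tr_block[OF cF rn r1, where y=y and x="inverse a"] that dmr by (simp add: tr_def \<tau>_eq Sf_def)
        show ?thesis
        proof (cases "\<tau> = 0")
          case True
          have "{y \<in> Sf d. tr (inverse a * y) = 0} = Sf d" using blk True by (auto simp: power_0_left)
          thus ?thesis using cnt cardSd True \<open>a + b = 0\<close> by (simp add: \<tau>_def)
        next
          case False
          have \<tau>S: "\<tau> \<in> Sf d"
          proof -
            have "\<tau> ^ (2 ^ d) = (\<Sum>s<n div r. (inverse a) ^ (2 ^ (m * (r * Suc s))))"
              by (simp add: \<tau>_eq frob_sum[OF cF] pow_shift[OF cF, symmetric] dmr algebra_simps del: power_Suc)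
            also have "\<dots> = (\<Sum>s<n div r. (inverse a) ^ (2 ^ (m * (r * s))))"
            proof (rule cyc_shift[where h = "\<lambda>s. (inverse a) ^ (2 ^ (m * (r * s)))"])
              have "m * (r * (n div r)) = N" using rn by (simp add: N_def)
              thus "inverse a ^ 2 ^ (m * (r * (n div r))) = inverse a ^ 2 ^ (m * (r * 0))"
                using pow_card[OF cF] by simp
            qed
            finally show ?thesis by (simp add: Sf_def \<tau>_eq)
          qed
          define G where "G = (\<lambda>z::'a. \<Sum>j<r. z ^ (2 ^ (m * j)))"
          have s1: "{y \<in> Sf d. tr (inverse a * y) = 0} = {y \<in> Sf d. G (\<tau> * y) = 0}"
            using blk by (auto simp: G_def mult.commute)
          have img: "(\<lambda>y. \<tau> * y) ` Sf d = Sf d"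
          proof (rule equalityI; rule subsetI)
            fix z :: 'a assume "z \<in> (\<lambda>y. \<tau> * y) ` Sf d"
            thus "z \<in> Sf d" using \<tau>S Sf_mult[OF cF] by blast
          next
            fix z :: 'a assume z: "z \<in> Sf d"
            hence "z / \<tau> \<in> Sf d" using \<tau>S Sf_divide[OF cF] by blast
            moreover have "z = \<tau> * (z / \<tau>)" using False by simp
            ultimately show "z \<in> (\<lambda>y. \<tau> * y) ` Sf d" by blast
          qed
          have "card {y \<in> Sf d. G (\<tau> * y) = 0} = card {z. G z = 0 \<and> z \<in> (\<lambda>y. \<tau> * y) ` Sf d}"
            using count_mult[OF cF False, of "\<lambda>z. G z = 0" "Sf d"] by simp
          also have "\<dots> = card {z \<in> Sf d. G z = 0}" by (simp add: img conj_commute)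
          also have "\<dots> = 2 ^ (d - m)" using kerG[OF cF hm dmr dN r1] by (simp add: G_def)
          also have "\<dots> = (2 ^ m) ^ (r - 1)" using dmr r1 by (simp add: power_mult[symmetric] diff_mult_distrib2)
          finally show ?thesis using cnt s1 False \<open>a + b = 0\<close> by (simp add: \<tau>_def)
        qed
      qed
    next
      assume C3: "\<not> [k = l] (mod m) \<and> a \<in> subfield_q m \<and> b \<in> subfield_q m"
      have aS: "a \<in> Sf m" "b \<in> Sf m" using C3 by (simp_all add: subfield_q_def Sf_def)
      define E' :: nat where "E' = (2 ^ m - 1) div (2 ^ e - 1)"
      have E'_alt: "E' = (2 ^ m - 1) div (2 ^ gcd T m - 1)" by (simp add: E'_def eT)
      show "card {x. tr x = 0 \<and> x \<in> K} =
            (if a ^ ((2 ^ m - 1) div (2 ^ e - 1)) \<noteq> b ^ ((2 ^ m - 1) div (2 ^ e - 1))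
                \<or> even (n div r)
             then 2 ^ d else 2 ^ (d - e))"
      proof (cases "a ^ E' = b ^ E'")
        case False
        have "\<forall>x\<in>K. tr x = 0"
        proof
          fix x assume "x \<in> K"
          hence Kx: "(a * x) ^ (2 ^ T) = b * x" by (simp add: K_def)
          define v where "v = tr x"
          have vS: "v \<in> Sf m" using tr_Sf[OF cF N_def] by (simp add: v_def tr_def)
          have "(a * v) ^ (2 ^ T) = a ^ (2 ^ T) * v ^ (2 ^ T)" by (simp add: power_mult_distrib)
          also have "v ^ (2 ^ T) = tr (x ^ (2 ^ T))" by (simp add: v_def tr_def tr_frob[OF cF])
          also have "a ^ (2 ^ T) * tr (x ^ (2 ^ T)) = tr (a ^ (2 ^ T) * x ^ (2 ^ T))"
            using tr_scal[OF cF Sf_pow[OF cF aS(1)]] by (simp add: tr_def)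
          also have "a ^ (2 ^ T) * x ^ (2 ^ T) = b * x" using Kx by (simp add: power_mult_distrib)
          also have "tr (b * x) = b * v" using tr_scal[OF cF aS(2)] by (simp add: tr_def v_def)
          finally have vK: "(a * v) ^ (2 ^ T) = b * v" .
          show "tr x = 0"
          proof (rule ccontr)
            assume "tr x \<noteq> 0"
            hence "a ^ E' = b ^ E'" using easy_dir[OF cF mN aS vS _ vK E'_alt] by (simp add: v_def)
            thus False using False by simp
          qed
        qed
        thus ?thesis using allK False by (simp add: E'_def)
      next
        case True
        define c' where "c' = b / a ^ (2 ^ T)"
        have "a ^ (2 ^ T * E') = a ^ E'" by (rule pow_TE[OF cF mN aS(1) a0 E'_alt])
        moreover have "c' ^ E' = b ^ E' / a ^ (2 ^ T * E')" by (simp add: c'_def power_divide power_mult)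
        ultimately have cE': "c' ^ E' = 1" using True a0 b0 by simp
        obtain w' where w': "w' \<in> Sf m" "w' \<noteq> 0" "w' ^ (2 ^ T) = c' * w'"
          using solve_T[OF cF mN cE' E'_alt] by blast
        have wK': "(a * w') ^ (2 ^ T) = b * w'" using w' a0 by (simp add: power_mult_distrib c'_def)
        have Kw': "K = (\<lambda>y. w' * y) ` Sf d" using Kstruct[OF cF w'(2) wK' b0] by (simp add: K_def dT)
        have cnt: "card {x. tr x = 0 \<and> x \<in> K} = card {y \<in> Sf d. tr y = 0}"
        proof -
          have "card {x. tr x = 0 \<and> x \<in> K} = card {y \<in> Sf d. tr (w' * y) = 0}"
            unfolding Kw' by (rule count_mult[OF cF w'(2)])
          also have "{y \<in> Sf d. tr (w' * y) = 0} = {y \<in> Sf d. tr y = 0}"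
            using tr_scal[OF cF w'(1)] w'(2) by (simp add: tr_def)
          finally show ?thesis .
        qed
        have e1: "e \<ge> 1" using eT hm by (simp add: Suc_le_eq)
        have em: "e dvd m" "e dvd T" using eT by simp_all
        have edvd: "e dvd d" using em mN dvd_trans[OF em(1) mN] by (simp add: dT)
        have gmd: "gcd m d = e"
        proof (rule dvd_antisym)
          show "e dvd gcd m d" using em edvd by simp
          have "gcd m d dvd T" using dTd by (meson dvd_trans gcd_dvd2)
          thus "gcd m d dvd e" by (simp add: eT)
        qed
        define \<mu> where "\<mu> = m div e"
        have mmu: "m = e * \<mu>" using em by (simp add: \<mu>_def)
        have dr: "d = e * r" using hr edvd by simp
        have cop: "coprime \<mu> r" using div_gcd_coprime[of m d] hm gmd by (simp add: \<mu>_def hr)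
        have r1: "r \<ge> 1" using dr d1 by (cases r) auto
        have rn: "r dvd n"
        proof -
          have "e * r dvd e * (\<mu> * n)" using dN dr mmu by (simp add: N_def mult.assoc)
          hence "r dvd \<mu> * n" using e1 by simp
          thus ?thesis using cop by (simp add: coprime_commute coprime_dvd_mult_right_iff)
        qed
        have dmr: "d dvd m * r" using dr mmu by simp
        have ySf: "y ^ (2 ^ (m * r)) = y" if "y \<in> Sf d" for y :: 'a
          using fix_dvd[OF cF dmr, of y] that unfolding Sf_def by blast
        have blk: "tr y = (\<Sum>j<r. (y * of_nat (n div r)) ^ (2 ^ (m * j)))" if "y \<in> Sf d" for y
          using tr_block[OF cF rn r1 ySf[OF that], where x=1] by (simp add: tr_def)
        show ?thesis
        proof (cases "even (n div r)")
          case True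
          have "{y \<in> Sf d. tr y = 0} = Sf d"
            using blk of_nat_parity(1)[OF cF True] by (auto simp: power_0_left)
          thus ?thesis using cnt cardSd True by simp
        next
          case False
          have "{y \<in> Sf d. tr y = 0} = {y \<in> Sf d. (\<Sum>i<r. y ^ (2 ^ (e * i))) = 0}"
            using blk of_nat_parity(2)[OF cF False] reindex_tr[OF cF e1 dr mmu cop]
            by (auto simp: Sf_def)
          hence "card {y \<in> Sf d. tr y = 0} = 2 ^ (d - e)" using kerG[OF cF e1 dr dN r1] by simp
          thus ?thesis using cnt True False by (simp add: E'_def)
        qed
      qed
    qed
  qed
  have EE: "(2 ^ (m * n) - 1) div (2 ^ d - 1) = E" by (simp add: E_def N_def)
  show ?thesis unfolding EE setK using part1 part2 by blast
qed

end
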